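(* Let $(\mathcal{B},\mathcal{B}',\langle\cdot,\cdot\rangle,k)$ be an RKBS with kernel on a set $X$ such that the set $\{k(x,\cdot):x\in X\}\subset\mathcal{B}'$ is linearly independent, and let $f:X\to X$. Then the Perron–Frobenius operator $K_f$ is densely defined with respect to $\langle\cdot,\cdot\rangle$, and $U_f=K_f'$, where $K_f'$ is the adjoint of $K_f$ with respect to $\langle\cdot,\cdot\rangle$.
   Context: An RKBS with kernel on $X$ is a quadruple $(\mathcal{B},\mathcal{B}',\langle\cdot,\cdot\rangle,k)$: $\mathcal{B},\mathcal{B}'$ are Banach spaces of functions on $X$ (pointwise operations), point evaluations on $\mathcal{B}$ are continuous, $\langle\cdot,\cdot\rangle:\mathcal{B}\times\mathcal{B}'\to\mathbb{C}$ is continuous bilinear, and $k:X\times X\to\mathbb{C}$ satisfies $k(x,\cdot)\in\mathcal{B}'$ and $g(x)=\langle g,k(x,\cdot)\rangle$ for all $x\in X$, $g\in\mathcal{B}$. The Koopman operator is $U_fg:=g\circ f$ on $D(U_f):=\{g\in\mathcal{B}: g\circ f\in\mathcal{B}\}$. The Perron–Frobenius operator $K_f:\mathrm{Span}\{k(x,\cdot):x\in X\}\to\mathrm{Span}\{k(x,\cdot):x\in X\}$ is the linear extension of $K_fk(x,\cdot):=k(f(x),\cdot)$. A subset $W\subset\mathcal{B}'$ is dense with respect to $\langle\cdot,\cdot\rangle$ if $g\in\mathcal{B}$ and $\langle g,w\rangle=0$ for all $w\in W$ imply $g=0$; an operator is densely defined w.r.t. $\langle\cdot,\cdot\rangle$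 if its domain is dense in this sense. For a densely defined $T:D(T)\subset\mathcal{B}'\to\mathcal{B}'$, its adjoint with respect to $\langle\cdot,\cdot\rangle$ is $T':D(T')\subset\mathcal{B}\to\mathcal{B}$ with $D(T')=\{g\in\mathcal{B}:\exists z\in\mathcal{B}\text{ with }\langle g,Th\rangle=\langle z,h\rangle\ \forall h\in D(T)\}$ and $T'g:=z$. Equality $U_f=K_f'$ includes equality of domains. *)

theory Defs
  imports "HOL-Analysis.Analysis"
begin

text \<open>Functions on X are modelled as elements of type 'x => complex (X = UNIV :: 'x set);
  a Banach space of functions on X is a set of such functions together with a norm on it.\<close>

definition banach_fun_space :: "('x \<Rightarrow> complex) set \<Rightarrow> (('x \<Rightarrow> complex) \<Rightarrow> real) \<Rightarrow> bool" where
  "banach_fun_space B nB \<longleftrightarrow>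
     (\<lambda>y. 0) \<in> B \<and>
     (\<forall>g\<in>B. \<forall>h\<in>B. (\<lambda>y. g y + h y) \<in> B) \<and>
     (\<forall>g\<in>B. \<forall>c::complex. (\<lambda>y. c * g y) \<in> B) \<and>
     (\<forall>g\<in>B. 0 \<le> nB g) \<and>
     (\<forall>g\<in>B. nB g = 0 \<longleftrightarrow> g = (\<lambda>y. 0)) \<and>
     (\<forall>g\<in>B. \<forall>c::complex. nB (\<lambda>y. c * g y) = cmod c * nB g) \<and>
     (\<forall>g\<in>B. \<forall>h\<in>B. nB (\<lambda>y. g y + h y) \<le> nB g + nB h) \<and>
     (\<forall>s::nat \<Rightarrow> 'x \<Rightarrow> complex. (\<forall>n. s n \<in> B) \<and>
          (\<forall>e>0. \<exists>N. \<forall>m\<ge>N. \<forall>n\<ge>N. nB (\<lambda>y. s m y - s n y) < e)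
        \<longrightarrow> (\<exists>g\<in>B. (\<lambda>n. nB (\<lambda>y. s n y - g y)) \<longlonglongrightarrow> 0))"

text \<open>RKBS with kernel: (B, B', pairing, k); nB, nB' are the norms of B, B'.
  k x is the function k(x, .).\<close>

definition rkbs ::
  "('x \<Rightarrow> complex) set \<Rightarrow> (('x \<Rightarrow> complex) \<Rightarrow> real) \<Rightarrow>
   ('x \<Rightarrow> complex) set \<Rightarrow> (('x \<Rightarrow> complex) \<Rightarrow> real) \<Rightarrow>
   (('x \<Rightarrow> complex) \<Rightarrow> ('x \<Rightarrow> complex) \<Rightarrow> complex) \<Rightarrow> ('x \<Rightarrow> 'x \<Rightarrow> complex) \<Rightarrow> bool" where
  "rkbs B nB B' nB' pair k \<longleftrightarrow>
     banach_fun_space B nB \<and> banach_fun_space B' nB' \<and>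
     (\<forall>x. \<exists>C. \<forall>g\<in>B. cmod (g x) \<le> C * nB g) \<and>
     (\<forall>g1\<in>B. \<forall>g2\<in>B. \<forall>h\<in>B'. pair (\<lambda>y. g1 y + g2 y) h = pair g1 h + pair g2 h) \<and>
     (\<forall>g\<in>B. \<forall>c. \<forall>h\<in>B'. pair (\<lambda>y. c * g y) h = c * pair g h) \<and>
     (\<forall>g\<in>B. \<forall>h1\<in>B'. \<forall>h2\<in>B'. pair g (\<lambda>y. h1 y + h2 y) = pair g h1 + pair g h2) \<and>
     (\<forall>g\<in>B. \<forall>c. \<forall>h\<in>B'. pair g (\<lambda>y. c * h y) = c * pair g h) \<and>
     (\<exists>C. \<forall>g\<in>B. \<forall>h\<in>B'. cmod (pair g h) \<le> C * nB g * nB' h) \<and>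
     (\<forall>x. k x \<in> B') \<and>
     (\<forall>x. \<forall>g\<in>B. g x = pair g (k x))"

definition kernel_lin_indep :: "('x \<Rightarrow> 'x \<Rightarrow> complex) \<Rightarrow> bool" where
  "kernel_lin_indep k \<longleftrightarrow>
     (\<forall>F c. finite F \<and> (\<lambda>y. \<Sum>x\<in>F. c x * k x y) = (\<lambda>y. 0) \<longrightarrow> (\<forall>x\<in>F. c x = (0::complex)))"

definition kernel_span :: "('x \<Rightarrow> 'x \<Rightarrow> complex) \<Rightarrow> ('x \<Rightarrow> complex) set" where
  "kernel_span k = {h. \<exists>F c. finite F \<and> h = (\<lambda>y. \<Sum>x\<in>F. c x * k x y)}"

text \<open>Perron-Frobenius operator: linear extension of k(x, .) |-> k(f x, .)
  (well defined when the family is linearly independent).\<close>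
definition perron_frobenius :: "('x \<Rightarrow> 'x \<Rightarrow> complex) \<Rightarrow> ('x \<Rightarrow> 'x) \<Rightarrow> ('x \<Rightarrow> complex) \<Rightarrow> ('x \<Rightarrow> complex)" where
  "perron_frobenius k f h = (SOME h'. \<exists>F c. finite F \<and> h = (\<lambda>y. \<Sum>x\<in>F. c x * k x y) \<and>
                                         h' = (\<lambda>y. \<Sum>x\<in>F. c x * k (f x) y))"

definition koopman_dom :: "('x \<Rightarrow> complex) set \<Rightarrow> ('x \<Rightarrow> 'x) \<Rightarrow> ('x \<Rightarrow> complex) set" where
  "koopman_dom B f = {g\<in>B. g \<circ> f \<in> B}"

definition koopman :: "('x \<Rightarrow> 'x) \<Rightarrow> ('x \<Rightarrow> complex) \<Rightarrow> ('x \<Rightarrow> complex)" where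
  "koopman f g = g \<circ> f"

definition dense_wrt :: "('x \<Rightarrow> complex) set \<Rightarrow> (('x \<Rightarrow> complex) \<Rightarrow> ('x \<Rightarrow> complex) \<Rightarrow> complex) \<Rightarrow> ('x \<Rightarrow> complex) set \<Rightarrow> bool" where
  "dense_wrt B pair W \<longleftrightarrow> (\<forall>g\<in>B. (\<forall>w\<in>W. pair g w = 0) \<longrightarrow> g = (\<lambda>y. 0))"

definition adj_dom :: "('x \<Rightarrow> complex) set \<Rightarrow> (('x \<Rightarrow> complex) \<Rightarrow> ('x \<Rightarrow> complex) \<Rightarrow> complex) \<Rightarrow>
    ('x \<Rightarrow> complex) set \<Rightarrow> (('x \<Rightarrow> complex) \<Rightarrow> ('x \<Rightarrow> complex)) \<Rightarrow> ('x \<Rightarrow> complex) set" where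
  "adj_dom B pair D T = {g\<in>B. \<exists>z\<in>B. \<forall>h\<in>D. pair g (T h) = pair z h}"

definition adj :: "('x \<Rightarrow> complex) set \<Rightarrow> (('x \<Rightarrow> complex) \<Rightarrow> ('x \<Rightarrow> complex) \<Rightarrow> complex) \<Rightarrow>
    ('x \<Rightarrow> complex) set \<Rightarrow> (('x \<Rightarrow> complex) \<Rightarrow> ('x \<Rightarrow> complex)) \<Rightarrow> ('x \<Rightarrow> complex) \<Rightarrow> ('x \<Rightarrow> complex)" where
  "adj B pair D T g = (THE z. z \<in> B \<and> (\<forall>h\<in>D. pair g (T h) = pair z h))"

end

theory Submission
  imports Defs
begin

lemma span_lin_gen:
  assumes r: "rkbs B nB B' nB' pair k" and g: "g \<in> B" and F: "finite F"
    and kk: "\<forall>x. kk x \<in> B'"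
  shows "(\<lambda>y. \<Sum>x\<in>F. c x * kk x y) \<in> B' \<and> pair g (\<lambda>y. \<Sum>x\<in>F. c x * kk x y) = (\<Sum>x\<in>F. c x * pair g (kk x))"
  using F
proof (induction F rule: finite_induct)
  case empty
  have z: "(\<lambda>y. 0::complex) \<in> B'" using r unfolding rkbs_def banach_fun_space_def by (elim conjE) assumption
  have lin: "\<forall>g\<in>B. \<forall>c. \<forall>h\<in>B'. pair g (\<lambda>y. c * h y) = c * pair g h"
    using r unfolding rkbs_def by blast
  have "pair g (\<lambda>y. 0 * (0::complex)) = 0 * pair g (\<lambda>y. 0)"
    using lin[rule_format, OF g, where c=0 and h="\<lambda>y. 0"] z by simp
  then show ?case using z by simp
next
  case (insert a F)
  have ka: "kk a \<in> B'" using kk by blast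
  have sm: "\<forall>g\<in>B'. \<forall>c. (\<lambda>y. c * g y) \<in> B'" using r unfolding rkbs_def banach_fun_space_def by (elim conjE) assumption
  have ca: "(\<lambda>y. c a * kk a y) \<in> B'" using sm[rule_format, OF ka, where c="c a"] .
  have eq: "(\<lambda>y. \<Sum>x\<in>insert a F. c x * kk x y) = (\<lambda>y. c a * kk a y + (\<Sum>x\<in>F. c x * kk x y))"
    using insert by simp
  have ad: "\<forall>g\<in>B'. \<forall>h\<in>B'. (\<lambda>y. g y + h y) \<in> B'" using r unfolding rkbs_def banach_fun_space_def by (elim conjE) assumption
  have pad: "\<forall>g\<in>B. \<forall>h1\<in>B'. \<forall>h2\<in>B'. pair g (\<lambda>y. h1 y + h2 y) = pair g h1 + pair g h2"
    using r unfolding rkbs_def by blast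
  have psm: "\<forall>g\<in>B. \<forall>c. \<forall>h\<in>B'. pair g (\<lambda>y. c * h y) = c * pair g h"
    using r unfolding rkbs_def by blast
  have IH1: "(\<lambda>y. \<Sum>x\<in>F. c x * kk x y) \<in> B'" using insert.IH by blast
  have mem: "(\<lambda>y. c a * kk a y + (\<Sum>x\<in>F. c x * kk x y)) \<in> B'"
    using ad[rule_format, OF ca IH1] by simp
  have "pair g (\<lambda>y. c a * kk a y + (\<Sum>x\<in>F. c x * kk x y)) = pair g (\<lambda>y. c a * kk a y) + pair g (\<lambda>y. \<Sum>x\<in>F. c x * kk x y)"
    using pad[rule_format, OF g ca IH1] by simp
  moreover have "pair g (\<lambda>y. c a * kk a y) = c a * pair g (kk a)"
    using psm[rule_format, OF g, where c="c a" and h="kk a"] ka by simp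
  ultimately show ?case using eq mem insert by simp
qed

lemma span_lin:
  assumes r: "rkbs B nB B' nB' pair k" and g: "g \<in> B" and F: "finite F"
  shows "pair g (\<lambda>y. \<Sum>x\<in>F. c x * k (f x) y) = (\<Sum>x\<in>F. c x * g (f x))"
    "pair g (\<lambda>y. \<Sum>x\<in>F. c x * k x y) = (\<Sum>x\<in>F. c x * g x)"
proof -
  have kk: "\<forall>x. k x \<in> B'" and ev: "\<forall>x. g x = pair g (k x)" using r g unfolding rkbs_def by blast+
  show "pair g (\<lambda>y. \<Sum>x\<in>F. c x * k (f x) y) = (\<Sum>x\<in>F. c x * g (f x))"
    using span_lin_gen[OF r g F, of "\<lambda>x. k (f x)" c] kk ev by simp
  show "pair g (\<lambda>y. \<Sum>x\<in>F. c x * k x y) = (\<Sum>x\<in>F. c x * g x)"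
    using span_lin_gen[OF r g F, of k c] kk ev by simp
qed

lemma pf_eval:
  assumes li: "kernel_lin_indep k" and F: "finite F"
  shows "perron_frobenius k f (\<lambda>y. \<Sum>x\<in>F. c x * k x y) = (\<lambda>y. \<Sum>x\<in>F. c x * k (f x) y)"
proof -
  let ?h = "\<lambda>y. \<Sum>x\<in>F. c x * k x y"
  have ex: "\<exists>h'. \<exists>G d. finite G \<and> ?h = (\<lambda>y. \<Sum>x\<in>G. d x * k x y) \<and> h' = (\<lambda>y. \<Sum>x\<in>G. d x * k (f x) y)"
    by (rule exI, rule exI[of _ F], rule exI[of _ c]) (simp add: F)
  have "\<exists>G d. finite G \<and> ?h = (\<lambda>y. \<Sum>x\<in>G. d x * k x y) \<and> perron_frobenius k f ?h = (\<lambda>y. \<Sum>x\<in>G. d x * k (f x) y)"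
    unfolding perron_frobenius_def by (rule someI_ex[OF ex])
  then obtain G d where G: "finite G" and hG: "?h = (\<lambda>y. \<Sum>x\<in>G. d x * k x y)"
    and pf: "perron_frobenius k f ?h = (\<lambda>y. \<Sum>x\<in>G. d x * k (f x) y)" by blast
  define H where "H = F \<union> G"
  define c' where "c' x = (if x \<in> F then c x else 0)" for x
  define d' where "d' x = (if x \<in> G then d x else 0)" for x
  have H: "finite H" using F G H_def by simp
  have sc: "(\<Sum>x\<in>F. c x * v x) = (\<Sum>x\<in>H. c' x * v x)" for v :: "'a \<Rightarrow> complex"
  proof -
    have "(\<Sum>x\<in>H. c' x * v x) = (\<Sum>x\<in>H. if x \<in> F then c x * v x else 0)"
      unfolding c'_def by (rule sum.cong) auto
    also have "\<dots> = (\<Sum>x\<in>H \<inter> F. c x * v x)" using H by (rule sum.inter_restrict[symmetric])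
    also have "\<dots> = (\<Sum>x\<in>F. c x * v x)" by (rule sum.cong) (auto simp: H_def)
    finally show ?thesis by (rule sym)
  qed
  have sd: "(\<Sum>x\<in>G. d x * v x) = (\<Sum>x\<in>H. d' x * v x)" for v :: "'a \<Rightarrow> complex"
  proof -
    have "(\<Sum>x\<in>H. d' x * v x) = (\<Sum>x\<in>H. if x \<in> G then d x * v x else 0)"
      unfolding d'_def by (rule sum.cong) auto
    also have "\<dots> = (\<Sum>x\<in>H \<inter> G. d x * v x)" using H by (rule sum.inter_restrict[symmetric])
    also have "\<dots> = (\<Sum>x\<in>G. d x * v x)" by (rule sum.cong) (auto simp: H_def)
    finally show ?thesis by (rule sym)
  qed
  have "(\<lambda>y. \<Sum>x\<in>H. (c' x - d' x) * k x y) = (\<lambda>y. 0)"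
  proof
    fix y
    have "(\<Sum>x\<in>H. (c' x - d' x) * k x y) = (\<Sum>x\<in>H. c' x * k x y) - (\<Sum>x\<in>H. d' x * k x y)"
      by (simp add: left_diff_distrib sum_subtractf)
    also have "\<dots> = ?h y - (\<Sum>x\<in>G. d x * k x y)" using sc[of "\<lambda>x. k x y"] sd[of "\<lambda>x. k x y"] by simp
    also have "\<dots> = 0" using hG by (metis diff_self)
    finally show "(\<Sum>x\<in>H. (c' x - d' x) * k x y) = 0" .
  qed
  then have "\<forall>x\<in>H. c' x - d' x = 0"
    using li[unfolded kernel_lin_indep_def, rule_format, of H "\<lambda>x. c' x - d' x"] H by simp
  then have cd: "\<forall>x\<in>H. c' x = d' x" by simp
  show ?thesis unfolding pf
  proof
    fix y
    show "(\<Sum>x\<in>G. d x * k (f x) y) = (\<Sum>x\<in>F. c x * k (f x) y)"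
      using sc[of "\<lambda>x. k (f x) y"] sd[of "\<lambda>x. k (f x) y"] cd by simp
  qed
qed

theorem lemma2:
  fixes B B' :: "('x \<Rightarrow> complex) set"
    and nB nB' :: "('x \<Rightarrow> complex) \<Rightarrow> real"
    and pair :: "('x \<Rightarrow> complex) \<Rightarrow> ('x \<Rightarrow> complex) \<Rightarrow> complex"
    and k :: "'x \<Rightarrow> 'x \<Rightarrow> complex"
    and f :: "'x \<Rightarrow> 'x"
  assumes "rkbs B nB B' nB' pair k"
    and "kernel_lin_indep k"
  shows "dense_wrt B pair (kernel_span k)
    \<and> adj_dom B pair (kernel_span k) (perron_frobenius k f) = koopman_dom B f
    \<and> (\<forall>g \<in> koopman_dom B f. adj B pair (kernel_span k) (perron_frobenius k f) g = koopman f g)"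
proof -
  note r = assms(1) and li = assms(2)
  have kx: "k x = (\<lambda>y. \<Sum>x'\<in>{x}. (\<lambda>_. 1) x' * k x' y)" for x by simp
  have kspan: "k x \<in> kernel_span k" for x
    unfolding kernel_span_def by (rule CollectI, rule exI[of _ "{x}"], rule exI[of _ "\<lambda>_. 1"]) simp
  have pfk: "perron_frobenius k f (k x) = k (f x)" for x
    using pf_eval[OF li, of "{x}" f "\<lambda>_. 1"] by simp
  have ev: "g x = pair g (k x)" if "g \<in> B" for g x using r that unfolding rkbs_def by blast
  have key: "z = g \<circ> f" if g: "g \<in> B" and z: "z \<in> B"
    and rel: "\<forall>h\<in>kernel_span k. pair g (perron_frobenius k f h) = pair z h" for g z
  proof
    fix x
    have "pair g (perron_frobenius k f (k x)) = pair z (k x)" using rel kspan by blast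
    then show "z x = (g \<circ> f) x" using ev[OF g, of "f x"] ev[OF z, of x] pfk by simp
  qed
  have rel2: "\<forall>h\<in>kernel_span k. pair g (perron_frobenius k f h) = pair (g \<circ> f) h"
    if g: "g \<in> B" and gf: "g \<circ> f \<in> B" for g
  proof
    fix h assume "h \<in> kernel_span k"
    then obtain F c where F: "finite F" and h: "h = (\<lambda>y. \<Sum>x\<in>F. c x * k x y)"
      unfolding kernel_span_def by blast
    have "pair g (perron_frobenius k f h) = pair g (\<lambda>y. \<Sum>x\<in>F. c x * k (f x) y)"
      using pf_eval[OF li F] h by simp
    also have "\<dots> = (\<Sum>x\<in>F. c x * g (f x))"
      using span_lin(1)[OF r g F] by simp
    finally show "pair g (perron_frobenius k f h) = pair (g \<circ> f) h"
      using span_lin(2)[OF r gf F, of c] h by simp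
  qed
  have dense: "dense_wrt B pair (kernel_span k)"
    unfolding dense_wrt_def
  proof (intro ballI impI)
    fix g assume g: "g \<in> B" and "\<forall>w\<in>kernel_span k. pair g w = 0"
    then have "pair g (k x) = 0" for x using kspan by blast
    then show "g = (\<lambda>y. 0)" using ev[OF g] by (intro ext) metis
  qed
  have dom: "adj_dom B pair (kernel_span k) (perron_frobenius k f) = koopman_dom B f"
    unfolding adj_dom_def koopman_dom_def
  proof (intro equalityI subsetI)
    fix g assume "g \<in> {g \<in> B. \<exists>z\<in>B. \<forall>h\<in>kernel_span k. pair g (perron_frobenius k f h) = pair z h}"
    then show "g \<in> {g \<in> B. g \<circ> f \<in> B}" using key by blast
  next
    fix g assume "g \<in> {g \<in> B. g \<circ> f \<in> B}"
    then show "g \<in> {g \<in> B. \<exists>z\<in>B. \<forall>h\<in>kernel_span k. pair g (perron_frobenius k f h) = pair z h}"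
      using rel2 by blast
  qed
  have act: "\<forall>g \<in> koopman_dom B f. adj B pair (kernel_span k) (perron_frobenius k f) g = koopman f g"
  proof
    fix g assume "g \<in> koopman_dom B f"
    then have g: "g \<in> B" and gf: "g \<circ> f \<in> B" unfolding koopman_dom_def by auto
    show "adj B pair (kernel_span k) (perron_frobenius k f) g = koopman f g"
      unfolding adj_def koopman_def
    proof (rule the_equality)
      show "g \<circ> f \<in> B \<and> (\<forall>h\<in>kernel_span k. pair g (perron_frobenius k f h) = pair (g \<circ> f) h)"
        using gf rel2[OF g gf] by blast
    next
      fix z assume "z \<in> B \<and> (\<forall>h\<in>kernel_span k. pair g (perron_frobenius k f h) = pair z h)"
      then show "z = g \<circ> f" using key[OF g] by blast
    qed
  qed
  show ?thesis using dense dom act by blast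
qed

end
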